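(* Let $\mathcal{X}$ be an SP which satisfies NUPBR$_{\rm loc}$. Then for any random variable $\tau:\Omega\to[0,\infty)$ taking at most countably many values, the set $\mathcal{X}_\tau=\{X_\tau:X\in\mathcal{X}\}$ is bounded in $L^0$.
   Context: Work on a filtered probability space $(\Omega,\mathcal{F},\mathbb{F},P)$, $\mathbb{F}=(\mathcal{F}_t)_{t\ge0}$ satisfying the usual conditions, $\mathcal{F}_0$ trivial; convention $0/0=1$. A set of processes (SP) is a set $\mathcal{X}$ of processes such that: (A) each $X\in\mathcal{X}$ is an adapted, nonnegative, $P$-a.s. right-continuous process on $[0,\infty)$ with $X_0=1$; (C) for $X,X'\in\mathcal{X}$ and $\alpha\in[0,1]$, $(1-\alpha)X+\alpha X'\in\mathcal{X}$; (D) for all $t\in[0,\infty)$, $A\in\mathcal{F}_t$, $X\in\mathcal{X}$ and $X'\in\mathcal{X}$ with $\{X'_t=0\}\subseteq\{X_t=0\}$ on $A$, the process $I_{A^c}X_\cdot + I_A (X_{t\wedge\cdot}/X'_t)X'_{t\vee\cdot}$ belongs to $\mathcal{X}$. NUPBR$_{\rm loc}$: for every $t\in[0,\infty)$, $\mathcal{X}_t=\{X_t:X\in\mathcal{X}\}$ is bounded in $L^0$. *)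

theory Defs
  imports "HOL-Probability.Probability"
begin

definition divc :: "real \<Rightarrow> real \<Rightarrow> real" where
  "divc a b = (if a = 0 \<and> b = 0 then 1 else a / b)"

definition usual_filtered_prob_space :: "'a measure \<Rightarrow> (real \<Rightarrow> 'a measure) \<Rightarrow> bool" where
  "usual_filtered_prob_space M F \<longleftrightarrow>
     prob_space M \<and>
     (\<forall>N\<in>null_sets M. \<forall>B. B \<subseteq> N \<longrightarrow> B \<in> sets M) \<and>
     (\<forall>t\<ge>0. space (F t) = space M \<and> sets (F t) \<subseteq> sets M) \<and>
     (\<forall>s t. 0 \<le> s \<longrightarrow> s \<le> t \<longrightarrow> sets (F s) \<subseteq> sets (F t)) \<and>
     (\<forall>t\<ge>0. sets (F t) = (\<Inter>u\<in>{t<..}. sets (F u))) \<and>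
     null_sets M \<subseteq> sets (F 0) \<and>
     (\<forall>A\<in>sets (F 0). measure M A = 0 \<or> measure M A = 1)"

definition paste :: "real \<Rightarrow> 'a set \<Rightarrow> (real \<Rightarrow> 'a \<Rightarrow> real) \<Rightarrow> (real \<Rightarrow> 'a \<Rightarrow> real)
    \<Rightarrow> (real \<Rightarrow> 'a \<Rightarrow> real)" where
  "paste t A X X' = (\<lambda>s \<omega>. if \<omega> \<in> A
      then (if s \<le> t then X s \<omega> else divc (X t \<omega>) (X' t \<omega>) * X' s \<omega>)
      else X s \<omega>)"

definition set_of_processes ::
  "'a measure \<Rightarrow> (real \<Rightarrow> 'a measure) \<Rightarrow> (real \<Rightarrow> 'a \<Rightarrow> real) set \<Rightarrow> bool" where
  "set_of_processes M F \<X> \<longleftrightarrow>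
     (\<forall>X\<in>\<X>.
        (\<forall>t\<ge>0. X t \<in> borel_measurable (F t)) \<and>
        (\<forall>t\<ge>0. \<forall>\<omega>\<in>space M. X t \<omega> \<ge> 0) \<and>
        (AE \<omega> in M. \<forall>t\<ge>0. continuous (at_right t) (\<lambda>s. X s \<omega>)) \<and>
        (\<forall>\<omega>\<in>space M. X 0 \<omega> = 1)) \<and>
     (\<forall>X\<in>\<X>. \<forall>X'\<in>\<X>. \<forall>\<alpha>::real. 0 \<le> \<alpha> \<longrightarrow> \<alpha> \<le> 1 \<longrightarrow>
        (\<lambda>s \<omega>. (1 - \<alpha>) * X s \<omega> + \<alpha> * X' s \<omega>) \<in> \<X>) \<and>
     (\<forall>t\<ge>0. \<forall>A\<in>sets (F t). \<forall>X\<in>\<X>. \<forall>X'\<in>\<X>.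
        (\<forall>\<omega>\<in>A. X' t \<omega> = 0 \<longrightarrow> X t \<omega> = 0) \<longrightarrow> paste t A X X' \<in> \<X>)"

definition bounded_L0 :: "'a measure \<Rightarrow> ('a \<Rightarrow> real) set \<Rightarrow> bool" where
  "bounded_L0 M S \<longleftrightarrow>
     (\<forall>e>0. \<exists>c. \<forall>Y\<in>S. measure M {\<omega>\<in>space M. \<bar>Y \<omega>\<bar> > c} \<le> e)"

definition NUPBR_loc :: "'a measure \<Rightarrow> (real \<Rightarrow> 'a \<Rightarrow> real) set \<Rightarrow> bool" where
  "NUPBR_loc M \<X> \<longleftrightarrow> (\<forall>t\<ge>0. bounded_L0 M {X t | X. X \<in> \<X>})"

end

theory Submission
  imports Defs
begin

theorem lemma2p2:
  fixes M :: "'a measure" and F :: "real \<Rightarrow> 'a measure"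
    and \<X> :: "(real \<Rightarrow> 'a \<Rightarrow> real) set" and \<tau> :: "'a \<Rightarrow> real"
  assumes "usual_filtered_prob_space M F"
    and "set_of_processes M F \<X>"
    and "NUPBR_loc M \<X>"
    and "\<tau> \<in> borel_measurable M"
    and "\<forall>\<omega>\<in>space M. 0 \<le> \<tau> \<omega>"
    and "countable (\<tau> ` space M)"
  shows "bounded_L0 M {(\<lambda>\<omega>. X (\<tau> \<omega>) \<omega>) | X. X \<in> \<X>}"
proof -
  interpret prob_space M using assms(1) unfolding usual_filtered_prob_space_def by blast
  have tm[measurable]: "\<tau> \<in> borel_measurable M" by fact
  define S where "S = \<tau> ` space M"
  have Sne: "S \<noteq> {}" using not_empty unfolding S_def by blast
  define f where "f = from_nat_into S"
  have rf: "range f = S" unfolding f_def using range_from_nat_into[OF Sne] assms(6) S_def by blast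
  have fpos: "f i \<ge> 0" for i
    using rf assms(5) unfolding S_def by (metis image_iff rangeI)
  have Xm: "X t \<in> borel_measurable M" if "X \<in> \<X>" "t \<ge> 0" for X t
  proof -
    have "X t \<in> borel_measurable (F t)" using assms(2) that unfolding set_of_processes_def by blast
    moreover have "\<forall>t\<ge>0. space (F t) = space M \<and> sets (F t) \<subseteq> sets M"
      using assms(1) unfolding usual_filtered_prob_space_def by (elim conjE) assumption
    then have "space (F t) = space M \<and> sets (F t) \<subseteq> sets M" using that by simp
    then have "subalgebra M (F t)" unfolding subalgebra_def by simp
    ultimately show ?thesis using measurable_from_subalg by blast
  qed
  show ?thesis unfolding bounded_L0_def
  proof (intro allI impI)
    fix e :: real assume e: "e > 0"
    define A where "A n = {\<omega>\<in>space M. \<forall>i<n. \<tau> \<omega> \<noteq> f i}" for n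
    have Am: "range A \<subseteq> sets M" unfolding A_def by auto
    have Ad: "decseq A" unfolding A_def decseq_def by (auto dest: order.strict_trans2)
    have Ai: "(\<Inter>n. A n) = {}"
    proof -
      { fix \<omega> assume w: "\<omega> \<in> (\<Inter>n. A n)"
        then have "\<omega> \<in> space M" unfolding A_def by auto
        then have "\<tau> \<omega> \<in> range f" using rf S_def by auto
        then obtain i where "\<tau> \<omega> = f i" by auto
        with w have False unfolding A_def by auto }
      then show ?thesis by blast
    qed
    have "(\<lambda>n. measure M (A n)) \<longlonglongrightarrow> 0"
      using finite_Lim_measure_decseq[OF Am Ad] Ai by simp
    then obtain N where N: "measure M (A N) < e/2"
      using e LIMSEQ_D[of "\<lambda>n. measure M (A n)" 0 "e/2"] by force
    define d where "d = e / (2 * real (Suc N))"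
    have d: "d > 0" using e unfolding d_def by auto
    have "\<forall>i. \<exists>c. \<forall>Y\<in>{X (f i) | X. X \<in> \<X>}. measure M {\<omega>\<in>space M. \<bar>Y \<omega>\<bar> > c} \<le> d"
      using assms(3) fpos d unfolding NUPBR_loc_def bounded_L0_def by blast
    then have "\<exists>c. \<forall>i. \<forall>Y\<in>{X (f i) | X. X \<in> \<X>}. measure M {\<omega>\<in>space M. \<bar>Y \<omega>\<bar> > c i} \<le> d"
      by (rule choice)
    then obtain c where c0: "\<forall>i. \<forall>Y\<in>{X (f i) | X. X \<in> \<X>}. measure M {\<omega>\<in>space M. \<bar>Y \<omega>\<bar> > c i} \<le> d"
      by blast
    have c: "\<And>i X. X \<in> \<X> \<Longrightarrow> measure M {\<omega>\<in>space M. \<bar>X (f i) \<omega>\<bar> > c i} \<le> d"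
      using c0 by blast
    define C where "C = (\<Sum>i<N. \<bar>c i\<bar>)"
    have cC: "c i \<le> C" if "i < N" for i
    proof -
      have "\<bar>c i\<bar> \<le> C" unfolding C_def
        using that by (intro member_le_sum) auto
      then show ?thesis by simp
    qed
    show "\<exists>C. \<forall>Y\<in>{(\<lambda>\<omega>. X (\<tau> \<omega>) \<omega>) | X. X \<in> \<X>}. measure M {\<omega>\<in>space M. \<bar>Y \<omega>\<bar> > C} \<le> e"
    proof (intro exI ballI)
      fix Y assume "Y \<in> {(\<lambda>\<omega>. X (\<tau> \<omega>) \<omega>) | X. X \<in> \<X>}"
      then obtain X where X: "X \<in> \<X>" and Y: "Y = (\<lambda>\<omega>. X (\<tau> \<omega>) \<omega>)" by blast
      define B where "B i = {\<omega>\<in>space M. \<bar>X (f i) \<omega>\<bar> > c i}" for i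
      have Bm: "B i \<in> sets M" for i
        using Xm[OF X fpos[of i]] unfolding B_def by measurable
      have sub: "{\<omega>\<in>space M. \<bar>Y \<omega>\<bar> > C} \<subseteq> A N \<union> (\<Union>i\<in>{..<N}. B i)"
      proof
        fix \<omega> assume w: "\<omega> \<in> {\<omega>\<in>space M. \<bar>Y \<omega>\<bar> > C}"
        show "\<omega> \<in> A N \<union> (\<Union>i\<in>{..<N}. B i)"
        proof (cases "\<omega> \<in> A N")
          case False
          then obtain i where i: "i < N" "\<tau> \<omega> = f i" using w unfolding A_def by auto
          then have "\<omega> \<in> B i" using w cC[OF i(1)] unfolding B_def Y by auto
          then show ?thesis using i by auto
        qed auto
      qed
      have "measure M {\<omega>\<in>space M. \<bar>Y \<omega>\<bar> > C} \<le> measure M (A N \<union> (\<Union>i\<in>{..<N}. B i))"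
        using sub Am Bm by (intro finite_measure_mono) auto
      also have "\<dots> \<le> measure M (A N) + measure M (\<Union>i\<in>{..<N}. B i)"
        using Am Bm by (intro measure_subadditive) (auto simp: emeasure_finite)
      also have "measure M (\<Union>i\<in>{..<N}. B i) \<le> (\<Sum>i<N. measure M (B i))"
        using Bm by (intro finite_measure_subadditive_finite) auto
      also have "\<dots> \<le> (\<Sum>i<N. d)"
        using c[OF X] unfolding B_def by (intro sum_mono) auto
      also have "\<dots> = real N * d" by simp
      also have "\<dots> \<le> e/2"
      proof -
        have "real N * d = e * real N / (2 * real (Suc N))" unfolding d_def by simp
        also have "\<dots> \<le> e / 2" using e by (simp add: field_simps)
        finally show ?thesis .
      qed
      finally show "measure M {\<omega>\<in>space M. \<bar>Y \<omega>\<bar> > C} \<le> e" using N by simp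
    qed
  qed
qed

end
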